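(* Let $k\ge 3$ be an integer, let $n\ge 2^{15k^2}$ be a multiple of $2k$, and let $p=20n^{-2/k}$. Let $G=G(n,p)$ be the random graph on $n$ labeled vertices in which each pair of vertices is an edge independently with probability $p$. Then: (a) the expected number of cliques of size $k+1$ in $G$ is at most $20^{\binom{k+1}{2}}$; (b) with probability more than $\frac{2}{3}$, every induced subgraph of $G$ with $\frac{n}{2k}$ vertices contains a clique of size $k$. *)

theory Defs
  imports "HOL-Probability.Probability"
begin

text \<open>Vertex set of G(n,p) is {0..<n}; a graph is given by its set of edges,
  each edge being a 2-element subset of the vertex set.\<close>

definition vertex_pairs :: "nat \<Rightarrow> nat set set" where
  "vertex_pairs n = {e. e \<subseteq> {..<n} \<and> card e = 2}"

definition gnp :: "nat \<Rightarrow> real \<Rightarrow> nat set set pmf" where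
  "gnp n p = map_pmf (\<lambda>f. {e \<in> vertex_pairs n. f e})
              (Pi_pmf (vertex_pairs n) False (\<lambda>_. bernoulli_pmf p))"

definition is_clique :: "nat set set \<Rightarrow> nat set \<Rightarrow> bool" where
  "is_clique E S \<longleftrightarrow> (\<forall>e. e \<subseteq> S \<and> card e = 2 \<longrightarrow> e \<in> E)"

definition num_cliques :: "nat \<Rightarrow> nat set set \<Rightarrow> nat \<Rightarrow> nat" where
  "num_cliques n E m = card {S. S \<subseteq> {..<n} \<and> card S = m \<and> is_clique E S}"

end

theory Submission
  imports Defs
begin

definition W :: "real \<Rightarrow> 'a set \<Rightarrow> 'a set \<Rightarrow> real" where
  "W p P E = (\<Prod>x\<in>P. if x \<in> E then p else 1 - p)"

definition Pr :: "real \<Rightarrow> 'a set \<Rightarrow> 'a set set \<Rightarrow> real" where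
  "Pr p P X = (\<Sum>E\<in>Pow P. if E \<in> X then W p P E else 0)"

lemma Pow_insert_sum:
  assumes "finite P" "a \<notin> P"
  shows "(\<Sum>E\<in>Pow (insert a P). h E) = (\<Sum>E\<in>Pow P. h E) + (\<Sum>E\<in>Pow P. h (insert a E))"
proof -
  have d: "Pow P \<inter> insert a ` Pow P = {}" using assms(2) by auto
  have i: "inj_on (insert a) (Pow P)"
  proof (rule inj_onI)
    fix x y assume xy: "x \<in> Pow P" "y \<in> Pow P" "insert a x = insert a y"
    have "a \<notin> x" "a \<notin> y" using xy(1,2) assms(2) by auto
    then have "x = insert a x - {a}" "y = insert a y - {a}" by auto
    then show "x = y" using xy(3) by simp
  qed
  have "(\<Sum>E\<in>Pow (insert a P). h E) = (\<Sum>E\<in>Pow P \<union> insert a ` Pow P. h E)"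
    by (simp only: Pow_insert)
  also have "\<dots> = (\<Sum>E\<in>Pow P. h E) + (\<Sum>E\<in>insert a ` Pow P. h E)"
    by (rule sum.union_disjoint) (use assms d in auto)
  also have "(\<Sum>E\<in>insert a ` Pow P. h E) = (\<Sum>E\<in>Pow P. h (insert a E))"
    by (simp add: sum.reindex[OF i])
  finally show ?thesis .
qed

lemma W_nonneg: "0 \<le> p \<Longrightarrow> p \<le> 1 \<Longrightarrow> 0 \<le> W p P E"
  unfolding W_def by (intro prod_nonneg) auto

lemma W_insert0:
  assumes "finite P" "a \<notin> P" "E \<subseteq> P"
  shows "W p (insert a P) E = (1 - p) * W p P E"
  using assms unfolding W_def by (subst prod.insert) auto

lemma W_insert1:
  assumes "finite P" "a \<notin> P" "E \<subseteq> P"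
  shows "W p (insert a P) (insert a E) = p * W p P E"
proof -
  have "(\<Prod>x\<in>P. if x \<in> insert a E then p else 1 - p) = (\<Prod>x\<in>P. if x \<in> E then p else 1 - p)"
    using assms by (intro prod.cong) auto
  then show ?thesis using assms unfolding W_def by (subst prod.insert) auto
qed

lemma Pr_insert:
  assumes "finite P" "a \<notin> P"
  shows "Pr p (insert a P) X = (1 - p) * Pr p P X + p * Pr p P {E. insert a E \<in> X}"
proof -
  have "Pr p (insert a P) X = (\<Sum>E\<in>Pow P. if E \<in> X then W p (insert a P) E else 0)
      + (\<Sum>E\<in>Pow P. if insert a E \<in> X then W p (insert a P) (insert a E) else 0)"
    unfolding Pr_def by (rule Pow_insert_sum[OF assms])
  also have "\<dots> = (\<Sum>E\<in>Pow P. (1 - p) * (if E \<in> X then W p P E else 0))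
      + (\<Sum>E\<in>Pow P. p * (if insert a E \<in> X then W p P E else 0))"
    using assms by (intro arg_cong2[where f="(+)"] sum.cong) (auto simp: W_insert0 W_insert1)
  finally show ?thesis unfolding Pr_def by (simp add: sum_distrib_left)
qed

lemma Pr_empty_space: "Pr p {} X = (if {} \<in> X then 1 else 0)"
  unfolding Pr_def W_def by simp

lemma Pr_nonneg: "0 \<le> p \<Longrightarrow> p \<le> 1 \<Longrightarrow> 0 \<le> Pr p P X"
  unfolding Pr_def by (intro sum_nonneg) (auto simp: W_nonneg)

lemma Pr_mono: "0 \<le> p \<Longrightarrow> p \<le> 1 \<Longrightarrow> X \<inter> Pow P \<subseteq> Y \<Longrightarrow> Pr p P X \<le> Pr p P Y"
  unfolding Pr_def by (intro sum_mono) (auto simp: W_nonneg)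

lemma Pr_UNIV: "finite P \<Longrightarrow> Pr p P UNIV = 1"
proof (induction P rule: finite_induct)
  case empty then show ?case by (simp add: Pr_empty_space)
next
  case (insert a P) then show ?case by (simp add: Pr_insert)
qed

lemma Pr_split: "Pr p P X = Pr p P (X \<inter> Y) + Pr p P (X - Y)"
  unfolding Pr_def sum.distrib[symmetric] by (intro sum.cong) auto

lemma Pr_union_le: "0 \<le> p \<Longrightarrow> p \<le> 1 \<Longrightarrow> X \<inter> Pow P \<subseteq> Y \<union> Z \<Longrightarrow> Pr p P X \<le> Pr p P Y + Pr p P Z"
proof -
  assume a: "0 \<le> p" "p \<le> 1" "X \<inter> Pow P \<subseteq> Y \<union> Z"
  show ?thesis unfolding Pr_def sum.distrib[symmetric]
  proof (intro sum_mono)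
    fix E assume E: "E \<in> Pow P"
    have w: "0 \<le> W p P E" using a W_nonneg by blast
    show "(if E \<in> X then W p P E else 0) \<le> (if E \<in> Y then W p P E else 0) + (if E \<in> Z then W p P E else 0)"
      using a(3) E w by (cases "E \<in> X"; cases "E \<in> Y"; cases "E \<in> Z") auto
  qed
qed

lemma Pr_Union_le:
  assumes "0 \<le> p" "p \<le> 1" "finite G"
  shows "Pr p P (\<Union>y\<in>G. Z y) \<le> (\<Sum>y\<in>G. Pr p P (Z y))"
  using assms(3)
proof (induction G rule: finite_induct)
  case empty then show ?case by (simp add: Pr_def)
next
  case (insert y G)
  have "Pr p P (\<Union>y\<in>insert y G. Z y) \<le> Pr p P (Z y) + Pr p P (\<Union>y\<in>G. Z y)"
    by (rule Pr_union_le[OF assms(1,2)]) auto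
  then show ?case using insert by simp
qed

lemma Pr_cong: "(\<And>E. E \<subseteq> P \<Longrightarrow> E \<in> X \<longleftrightarrow> E \<in> Y) \<Longrightarrow> Pr p P X = Pr p P Y"
  unfolding Pr_def by (intro sum.cong) auto

lemma Pr_zero: "(\<And>E. E \<subseteq> P \<Longrightarrow> E \<notin> X) \<Longrightarrow> Pr p P X = 0"
  unfolding Pr_def by (intro sum.neutral) auto

definition evt :: "'a set \<Rightarrow> 'a set set" where "evt A = {E. A \<subseteq> E}"

lemma harris:
  assumes "finite P" "0 \<le> p" "p \<le> 1"
  shows "(\<And>E E'. E \<subseteq> E' \<Longrightarrow> E' \<subseteq> P \<Longrightarrow> E \<in> X \<Longrightarrow> E' \<in> X) \<Longrightarrow>
         (\<And>E E'. E \<subseteq> E' \<Longrightarrow> E' \<subseteq> P \<Longrightarrow> E' \<in> Y \<Longrightarrow> E \<in> Y) \<Longrightarrow>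
         Pr p P (X \<inter> Y) \<le> Pr p P X * Pr p P Y"
  using assms(1)
proof (induction P arbitrary: X Y rule: finite_induct)
  case empty
  then show ?case by (simp add: Pr_empty_space)
next
  case (insert a P)
  define X1 where "X1 = {E. insert a E \<in> X}"
  define Y1 where "Y1 = {E. insert a E \<in> Y}"
  have upX: "\<And>E E'. E \<subseteq> E' \<Longrightarrow> E' \<subseteq> P \<Longrightarrow> E \<in> X \<Longrightarrow> E' \<in> X"
    using insert.prems(1) by blast
  have upX1: "\<And>E E'. E \<subseteq> E' \<Longrightarrow> E' \<subseteq> P \<Longrightarrow> E \<in> X1 \<Longrightarrow> E' \<in> X1"
  proof -
    fix E E' assume h: "E \<subseteq> E'" "E' \<subseteq> P" "E \<in> X1"
    have "insert a E \<subseteq> insert a E'" "insert a E' \<subseteq> insert a P" using h by auto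
    then show "E' \<in> X1" using h(3) insert.prems(1)[of "insert a E" "insert a E'"] by (simp add: X1_def)
  qed
  have dnY: "\<And>E E'. E \<subseteq> E' \<Longrightarrow> E' \<subseteq> P \<Longrightarrow> E' \<in> Y \<Longrightarrow> E \<in> Y"
    using insert.prems(2) by blast
  have dnY1: "\<And>E E'. E \<subseteq> E' \<Longrightarrow> E' \<subseteq> P \<Longrightarrow> E' \<in> Y1 \<Longrightarrow> E \<in> Y1"
  proof -
    fix E E' assume h: "E \<subseteq> E'" "E' \<subseteq> P" "E' \<in> Y1"
    have "insert a E \<subseteq> insert a E'" "insert a E' \<subseteq> insert a P" using h by auto
    then show "E \<in> Y1" using h(3) insert.prems(2)[of "insert a E" "insert a E'"] by (simp add: Y1_def)
  qed
  have sX: "X \<inter> Pow P \<subseteq> X1"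
  proof
    fix E assume "E \<in> X \<inter> Pow P"
    then show "E \<in> X1" using insert.prems(1)[of E "insert a E"] by (auto simp: X1_def)
  qed
  have sY: "Y1 \<inter> Pow P \<subseteq> Y"
  proof
    fix E assume "E \<in> Y1 \<inter> Pow P"
    then show "E \<in> Y" using insert.prems(2)[of E "insert a E"] by (auto simp: Y1_def)
  qed
  define x0 where "x0 = Pr p P X"
  define x1 where "x1 = Pr p P X1"
  define y0 where "y0 = Pr p P Y"
  define y1 where "y1 = Pr p P Y1"
  have h0: "Pr p P (X \<inter> Y) \<le> x0 * y0" unfolding x0_def y0_def by (rule insert.IH[OF upX dnY])
  have h1: "Pr p P (X1 \<inter> Y1) \<le> x1 * y1" unfolding x1_def y1_def by (rule insert.IH[OF upX1 dnY1])
  have "x0 \<le> x1" unfolding x0_def x1_def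
    by (rule Pr_mono[OF assms(2,3) sX])
  moreover have "y1 \<le> y0" unfolding y0_def y1_def
    by (rule Pr_mono[OF assms(2,3) sY])
  ultimately have key: "0 \<le> p * (1 - p) * ((x1 - x0) * (y0 - y1))"
    using assms by (intro mult_nonneg_nonneg) auto
  have e: "{E. insert a E \<in> X \<inter> Y} = X1 \<inter> Y1" by (auto simp: X1_def Y1_def)
  have "Pr p (insert a P) (X \<inter> Y) = (1 - p) * Pr p P (X \<inter> Y) + p * Pr p P (X1 \<inter> Y1)"
    unfolding Pr_insert[OF insert.hyps(1,2)] e by simp
  also have "\<dots> \<le> (1 - p) * (x0 * y0) + p * (x1 * y1)"
    using h0 h1 assms by (intro add_mono mult_left_mono) auto
  also have "\<dots> \<le> ((1 - p) * x0 + p * x1) * ((1 - p) * y0 + p * y1)"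
  proof -
    have "((1 - p) * x0 + p * x1) * ((1 - p) * y0 + p * y1) - ((1 - p) * (x0 * y0) + p * (x1 * y1))
          = p * (1 - p) * ((x1 - x0) * (y0 - y1))" by (simp add: algebra_simps)
    then show ?thesis using key by linarith
  qed
  also have "\<dots> = Pr p (insert a P) X * Pr p (insert a P) Y"
    unfolding Pr_insert[OF insert.hyps(1,2)] x0_def x1_def y0_def y1_def X1_def Y1_def by simp
  finally show ?case .
qed

lemma Pr_indep:
  assumes "finite P"
  shows "A \<subseteq> P \<Longrightarrow> (\<And>E. E \<subseteq> P \<Longrightarrow> E \<in> D \<longleftrightarrow> E - A \<in> D) \<Longrightarrow>
         Pr p P (evt A \<inter> D) = p ^ card A * Pr p P D"
  using assms
proof (induction P arbitrary: A D rule: finite_induct)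
  case empty
  then show ?case by (simp add: Pr_empty_space evt_def)
next
  case (insert a P)
  define D1 where "D1 = {E. insert a E \<in> D}"
  show ?case
  proof (cases "a \<in> A")
    case True
    have A': "A - {a} \<subseteq> P" using insert.prems(1) by auto
    have D1p: "\<And>E. E \<subseteq> P \<Longrightarrow> E \<in> D1 \<longleftrightarrow> E - (A - {a}) \<in> D1"
    proof -
      fix E assume E: "E \<subseteq> P"
      have f1: "insert a E \<in> D \<longleftrightarrow> insert a E - A \<in> D" by (rule insert.prems(2)) (use E in auto)
      have f2: "insert a (E - (A - {a})) \<in> D \<longleftrightarrow> insert a (E - (A - {a})) - A \<in> D"
        by (rule insert.prems(2)) (use E in auto)
      have f3: "insert a E - A = insert a (E - (A - {a})) - A" using True by auto
      show "E \<in> D1 \<longleftrightarrow> E - (A - {a}) \<in> D1" unfolding D1_def mem_Collect_eq f1 f2 f3 ..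
    qed
    have z: "Pr p P (evt A \<inter> D) = 0"
      by (rule Pr_zero) (use True insert.hyps in \<open>auto simp: evt_def\<close>)
    have e: "{E. insert a E \<in> evt A \<inter> D} = evt (A - {a}) \<inter> D1"
      using True by (auto simp: D1_def evt_def)
    have DD1: "Pr p P D = Pr p P D1"
    proof (rule Pr_cong)
      fix E assume E: "E \<subseteq> P"
      have f1: "E \<in> D \<longleftrightarrow> E - A \<in> D" by (rule insert.prems(2)) (use E in auto)
      have f2: "insert a E \<in> D \<longleftrightarrow> insert a E - A \<in> D" by (rule insert.prems(2)) (use E in auto)
      have f3: "insert a E - A = E - A" using True by auto
      show "E \<in> D \<longleftrightarrow> E \<in> D1" unfolding D1_def mem_Collect_eq f1 f2 f3 ..
    qed
    have fA: "finite A" using insert.prems(1) insert.hyps(1) finite_subset by blast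
    have cA: "card A = Suc (card (A - {a}))" using True fA
      by (metis card_Suc_Diff1)
    have "Pr p (insert a P) (evt A \<inter> D) = p * Pr p P (evt (A - {a}) \<inter> D1)"
      unfolding Pr_insert[OF insert.hyps(1,2)] e z by simp
    also have "\<dots> = p * (p ^ card (A - {a}) * Pr p P D1)"
    proof -
      have YY: "Pr p P (evt (A - {a}) \<inter> D1) = p ^ card (A - {a}) * Pr p P D1" by (rule insert.IH[OF A' D1p])
      show ?thesis unfolding YY ..
    qed
    also have "\<dots> = p ^ card A * Pr p P D1" using cA by simp
    also have "Pr p P D1 = Pr p (insert a P) D"
      unfolding Pr_insert[OF insert.hyps(1,2)] D1_def[symmetric] DD1 by (simp add: algebra_simps)
    finally show ?thesis .
  next
    case False
    have A': "A \<subseteq> P" using insert.prems(1) False by auto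
    have Dp: "\<And>E. E \<subseteq> P \<Longrightarrow> E \<in> D \<longleftrightarrow> E - A \<in> D"
      by (rule insert.prems(2)) auto
    have D1p: "\<And>E. E \<subseteq> P \<Longrightarrow> E \<in> D1 \<longleftrightarrow> E - A \<in> D1"
    proof -
      fix E assume E: "E \<subseteq> P"
      have f1: "insert a E \<in> D \<longleftrightarrow> insert a E - A \<in> D" by (rule insert.prems(2)) (use E in auto)
      have f3: "insert a E - A = insert a (E - A)"
        using False by auto
      show "E \<in> D1 \<longleftrightarrow> E - A \<in> D1" unfolding D1_def mem_Collect_eq f1 f3 ..
    qed
    have e: "{E. insert a E \<in> evt A \<inter> D} = evt A \<inter> D1"
      using False by (auto simp: D1_def evt_def)
    have "Pr p (insert a P) (evt A \<inter> D)
        = (1 - p) * Pr p P (evt A \<inter> D) + p * Pr p P (evt A \<inter> D1)"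
      unfolding Pr_insert[OF insert.hyps(1,2)] e by simp
    also have "\<dots> = p ^ card A * ((1 - p) * Pr p P D + p * Pr p P D1)"
    proof -
      have XX: "Pr p P (evt A \<inter> D) = p ^ card A * Pr p P D" by (rule insert.IH[OF A' Dp])
      have YY: "Pr p P (evt A \<inter> D1) = p ^ card A * Pr p P D1" by (rule insert.IH[OF A' D1p])
      show ?thesis unfolding XX YY by (simp add: algebra_simps)
    qed
    also have "\<dots> = p ^ card A * Pr p (insert a P) D"
      unfolding Pr_insert[OF insert.hyps(1,2)] D1_def by simp
    finally show ?thesis .
  qed
qed

lemma Pr_principal: "finite P \<Longrightarrow> A \<subseteq> P \<Longrightarrow> Pr p P (evt A) = p ^ card A"
  using Pr_indep[of P A UNIV p] by (simp add: Pr_UNIV)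

lemma evt_up: "E \<subseteq> E' \<Longrightarrow> E \<in> evt A \<Longrightarrow> E' \<in> evt A"
  unfolding evt_def by auto


lemma janson:
  fixes A :: "'b \<Rightarrow> 'a set"
  assumes P: "finite P" and p: "0 \<le> p" "p \<le> 1" and F: "finite F"
  shows "(\<forall>x\<in>F. A x \<subseteq> P) \<Longrightarrow> Pr p P {E. \<forall>x\<in>F. \<not> A x \<subseteq> E} \<le>
    exp (- (\<Sum>x\<in>F. p ^ card (A x)) +
         (\<Sum>x\<in>F. \<Sum>y\<in>{y\<in>F. y \<noteq> x \<and> A x \<inter> A y \<noteq> {}}. p ^ card (A x \<union> A y)))"
  using F
proof (induction F rule: finite_induct)
  case empty
  have "Pr p P {E. \<forall>x\<in>{}. \<not> A x \<subseteq> E} = 1" using Pr_UNIV[OF P] by simp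
  then show ?case by simp
next
  case (insert x F)
  define S where "S = (\<lambda>F. - (\<Sum>x\<in>F. p ^ card (A x)) +
         (\<Sum>x\<in>F. \<Sum>y\<in>{y\<in>F. y \<noteq> x \<and> A x \<inter> A y \<noteq> {}}. p ^ card (A x \<union> A y)))"
  define N where "N = {y\<in>F. A x \<inter> A y \<noteq> {}}"
  define \<mu> where "\<mu> = p ^ card (A x)"
  define \<delta> where "\<delta> = (\<Sum>y\<in>N. p ^ card (A x \<union> A y))"
  define D where "D = {E. \<forall>y\<in>F. A y \<inter> A x = {} \<longrightarrow> \<not> A y \<subseteq> E}"
  define Q where "Q = Pr p P {E. \<forall>x\<in>F. \<not> A x \<subseteq> E}"
  have AF: "\<forall>x\<in>F. A x \<subseteq> P" and Ax: "A x \<subseteq> P" using insert.prems by auto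
  have IH: "Q \<le> exp (S F)" unfolding Q_def S_def using insert.IH[OF AF] .
  have fN: "finite N" unfolding N_def using insert.hyps(1) by simp
  have Qnn: "0 \<le> Q" unfolding Q_def by (rule Pr_nonneg[OF p])
  have QD: "Q \<le> Pr p P D" unfolding Q_def D_def by (rule Pr_mono[OF p]) auto
  have split: "Q = Pr p P ({E. \<forall>x\<in>F. \<not> A x \<subseteq> E} \<inter> evt (A x))
      + Pr p P {E. \<forall>x\<in>insert x F. \<not> A x \<subseteq> E}"
  proof -
    have "{E. \<forall>x\<in>F. \<not> A x \<subseteq> E} - evt (A x) = {E. \<forall>x\<in>insert x F. \<not> A x \<subseteq> E}"
      unfolding evt_def by auto
    then show ?thesis unfolding Q_def using Pr_split[of p P "{E. \<forall>x\<in>F. \<not> A x \<subseteq> E}" "evt (A x)"] by simp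
  qed
  have c1: "Pr p P (evt (A x) \<inter> D) = \<mu> * Pr p P D"
    unfolding \<mu>_def
  proof (rule Pr_indep[OF P Ax])
    fix E :: "'a set" assume "E \<subseteq> P"
    have "\<And>y. A y \<inter> A x = {} \<Longrightarrow> A y \<subseteq> E \<longleftrightarrow> A y \<subseteq> E - A x" by auto
    then show "E \<in> D \<longleftrightarrow> E - A x \<in> D" unfolding D_def by auto
  qed
  have c2: "Pr p P (evt (A x) \<inter> D) \<le> Pr p P ({E. \<forall>x\<in>F. \<not> A x \<subseteq> E} \<inter> evt (A x))
      + Pr p P (\<Union>y\<in>N. evt (A x \<union> A y) \<inter> D)"
  proof (rule Pr_union_le[OF p], rule subsetI)
    fix E assume E: "E \<in> evt (A x) \<inter> D \<inter> Pow P"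
    show "E \<in> {E. \<forall>x\<in>F. \<not> A x \<subseteq> E} \<inter> evt (A x) \<union> (\<Union>y\<in>N. evt (A x \<union> A y) \<inter> D)"
    proof (cases "\<forall>y\<in>F. \<not> A y \<subseteq> E")
      case True then show ?thesis using E by auto
    next
      case False
      then obtain y where y: "y \<in> F" "A y \<subseteq> E" by auto
      have "A y \<inter> A x \<noteq> {}" using E y unfolding D_def by auto
      then have "y \<in> N" using y unfolding N_def by auto
      moreover have "E \<in> evt (A x \<union> A y) \<inter> D" using E y unfolding evt_def by auto
      ultimately show ?thesis by blast
    qed
  qed
  have c3: "Pr p P (\<Union>y\<in>N. evt (A x \<union> A y) \<inter> D) \<le> \<delta> * Pr p P D"
  proof -
    have "Pr p P (\<Union>y\<in>N. evt (A x \<union> A y) \<inter> D) \<le> (\<Sum>y\<in>N. Pr p P (evt (A x \<union> A y) \<inter> D))"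
      by (rule Pr_Union_le[OF p fN])
    also have "\<dots> \<le> (\<Sum>y\<in>N. p ^ card (A x \<union> A y) * Pr p P D)"
    proof (rule sum_mono)
      fix y assume y: "y \<in> N"
      then have Ay: "A y \<subseteq> P" using AF N_def by auto
      have "Pr p P (evt (A x \<union> A y) \<inter> D) \<le> Pr p P (evt (A x \<union> A y)) * Pr p P D"
      proof (rule harris[OF P p])
        fix E E' :: "'a set" assume "E \<subseteq> E'" "E \<in> evt (A x \<union> A y)"
        then show "E' \<in> evt (A x \<union> A y)" by (rule evt_up)
      next
        fix E E' :: "'a set" assume "E \<subseteq> E'" "E' \<in> D"
        then show "E \<in> D" unfolding D_def by blast
      qed
      also have "Pr p P (evt (A x \<union> A y)) = p ^ card (A x \<union> A y)"
        by (rule Pr_principal[OF P]) (use Ax Ay in auto)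
      finally show "Pr p P (evt (A x \<union> A y) \<inter> D) \<le> p ^ card (A x \<union> A y) * Pr p P D" .
    qed
    also have "\<dots> = \<delta> * Pr p P D" unfolding \<delta>_def by (simp add: sum_distrib_right)
    finally show ?thesis .
  qed
  define Q' where "Q' = Pr p P {E. \<forall>x\<in>insert x F. \<not> A x \<subseteq> E}"
  have step: "Q' \<le> Q * (1 - \<mu> + \<delta>)"
  proof (cases "\<mu> - \<delta> \<ge> 0")
    case True
    have "Q' = Q - Pr p P ({E. \<forall>x\<in>F. \<not> A x \<subseteq> E} \<inter> evt (A x))" using split Q'_def by simp
    also have "\<dots> \<le> Q - Pr p P D * (\<mu> - \<delta>)" using c1 c2 c3 by (simp add: algebra_simps)
    also have "\<dots> \<le> Q - Q * (\<mu> - \<delta>)" using QD True by (simp add: mult_right_mono)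
    finally show ?thesis by (simp add: algebra_simps)
  next
    case False
    have "Q' \<le> Q" using split Q'_def Pr_nonneg[OF p] by (metis le_add_same_cancel2)
    also have "\<dots> \<le> Q * (1 - \<mu> + \<delta>)" using False Qnn by (simp add: mult_le_cancel_left1)
    finally show ?thesis .
  qed
  have "Q * (1 - \<mu> + \<delta>) \<le> exp (S F) * exp (- \<mu> + \<delta>)"
  proof (rule mult_mono)
    show "1 - \<mu> + \<delta> \<le> exp (- \<mu> + \<delta>)" using exp_ge_add_one_self[of "- \<mu> + \<delta>"] by (simp add: algebra_simps)
    have "\<mu> \<le> 1" unfolding \<mu>_def using p by (simp add: power_le_one)
    moreover have "0 \<le> \<delta>" unfolding \<delta>_def using p by (simp add: sum_nonneg)
    ultimately show "0 \<le> 1 - \<mu> + \<delta>" by simp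
  qed (use IH Qnn in auto)
  also have "\<dots> = exp (S F - \<mu> + \<delta>)" by (simp add: exp_add[symmetric])
  also have "S F - \<mu> + \<delta> \<le> S (insert x F)"
  proof -
    let ?g = "\<lambda>z T. \<Sum>y\<in>{y\<in>T. y \<noteq> z \<and> A z \<inter> A y \<noteq> {}}. p ^ card (A z \<union> A y)"
    have e1: "{y\<in>insert x F. y \<noteq> x \<and> A x \<inter> A y \<noteq> {}} = N" unfolding N_def using insert.hyps(2) by auto
    have m: "?g z F \<le> ?g z (insert x F)" if "z \<in> F" for z
      by (rule sum_mono2) (use insert.hyps(1) p in auto)
    have a1: "(\<Sum>x\<in>insert x F. p ^ card (A x)) = \<mu> + (\<Sum>x\<in>F. p ^ card (A x))"
      unfolding \<mu>_def using insert.hyps by simp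
    have a2: "(\<Sum>z\<in>insert x F. ?g z (insert x F)) = ?g x (insert x F) + (\<Sum>z\<in>F. ?g z (insert x F))"
      by (rule sum.insert) (use insert.hyps in auto)
    have a3: "?g x (insert x F) = \<delta>" unfolding \<delta>_def e1 ..
    have "S (insert x F) = - \<mu> - (\<Sum>x\<in>F. p ^ card (A x)) + (\<delta> + (\<Sum>z\<in>F. ?g z (insert x F)))"
      unfolding S_def a1 a2 a3 by simp
    moreover have "(\<Sum>z\<in>F. ?g z F) \<le> (\<Sum>z\<in>F. ?g z (insert x F))" by (rule sum_mono) (rule m)
    ultimately show ?thesis unfolding S_def by simp
  qed
  finally have "Q * (1 - \<mu> + \<delta>) \<le> exp (S (insert x F))" by simp
  with step show ?case unfolding Q'_def S_def by simp
qed


lemma finite_vertex_pairs: "finite (vertex_pairs n)"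
  unfolding vertex_pairs_def by (rule finite_subset[of _ "Pow {..<n}"]) auto

lemma pmf_gnp:
  assumes p: "0 \<le> p" "p \<le> 1"
  shows "pmf (gnp n p) E = (if E \<subseteq> vertex_pairs n then W p (vertex_pairs n) E else 0)"
proof -
  define P where "P = vertex_pairs n"
  define PI where "PI = Pi_pmf P False (\<lambda>_. bernoulli_pmf p)"
  define g where "g = (\<lambda>f. {e \<in> P. f (e::nat set)})"
  have fP: "finite P" unfolding P_def by (rule finite_vertex_pairs)
  have gnp: "gnp n p = map_pmf g PI" unfolding gnp_def P_def PI_def g_def ..
  have setPi: "set_pmf PI \<subseteq> {f. \<forall>x. x \<notin> P \<longrightarrow> f x = False}"
    unfolding PI_def by (rule set_Pi_pmf_subset[OF fP])
  show ?thesis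
  proof (cases "E \<subseteq> P")
    case False
    have "g -` {E} = {}" using False unfolding g_def by auto
    then show ?thesis using False unfolding gnp P_def[symmetric] by (simp add: pmf_map)
  next
    case True
    define chi where "chi = (\<lambda>e. e \<in> E)"
    have c1: "g -` {E} \<inter> set_pmf PI \<subseteq> {chi}"
    proof
      fix f assume f: "f \<in> g -` {E} \<inter> set_pmf PI"
      then have out: "\<forall>x. x \<notin> P \<longrightarrow> f x = False" using setPi by auto
      have "{e \<in> P. f e} = E" using f unfolding g_def by auto
      then have "f = chi" unfolding chi_def using out True by (auto simp: fun_eq_iff)
      then show "f \<in> {chi}" by simp
    qed
    have c2: "{chi} \<subseteq> g -` {E}" unfolding chi_def g_def using True by auto
    have "measure PI (g -` {E}) = measure PI (g -` {E} \<inter> set_pmf PI)"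
      by (simp add: measure_Int_set_pmf)
    also have "\<dots> \<le> measure PI {chi}" by (rule measure_pmf.finite_measure_mono[OF c1]) simp
    finally have le1: "measure PI (g -` {E}) \<le> measure PI {chi}" .
    have le2: "measure PI {chi} \<le> measure PI (g -` {E})"
      by (rule measure_pmf.finite_measure_mono[OF c2]) simp
    have "pmf (gnp n p) E = measure PI {chi}" unfolding gnp pmf_map using le1 le2 by simp
    also have "\<dots> = pmf PI chi" by (simp add: measure_pmf_single)
    also have "\<dots> = (\<Prod>x\<in>P. pmf (bernoulli_pmf p) (chi x))"
      unfolding PI_def using True by (subst pmf_Pi[OF fP]) (auto simp: chi_def)
    also have "\<dots> = W p P E" unfolding W_def chi_def
      by (intro prod.cong) (use p in auto)
    finally show ?thesis using True unfolding P_def by simp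
  qed
qed

lemma set_pmf_gnp: "0 \<le> p \<Longrightarrow> p \<le> 1 \<Longrightarrow> set_pmf (gnp n p) \<subseteq> Pow (vertex_pairs n)"
  using pmf_gnp[of p n] by (auto simp: set_pmf_iff split: if_splits)

lemma prob_gnp:
  assumes p: "0 \<le> p" "p \<le> 1"
  shows "measure_pmf.prob (gnp n p) X = Pr p (vertex_pairs n) X"
proof -
  let ?M = "gnp n p" and ?P = "vertex_pairs n"
  have "measure ?M X = measure ?M (X \<inter> set_pmf ?M)" by (simp add: measure_Int_set_pmf)
  also have "\<dots> \<le> measure ?M (X \<inter> Pow ?P)"
    by (rule measure_pmf.finite_measure_mono) (use set_pmf_gnp[OF p, of n] in auto)
  finally have l1: "measure ?M X \<le> measure ?M (X \<inter> Pow ?P)" .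
  have l2: "measure ?M (X \<inter> Pow ?P) \<le> measure ?M X"
    by (rule measure_pmf.finite_measure_mono) auto
  have fin: "finite (X \<inter> Pow ?P)" using finite_vertex_pairs by auto
  have "measure ?M X = measure ?M (X \<inter> Pow ?P)" using l1 l2 by simp
  also have "\<dots> = (\<Sum>E\<in>X \<inter> Pow ?P. pmf ?M E)" by (rule measure_measure_pmf_finite[OF fin])
  also have "\<dots> = (\<Sum>E\<in>Pow ?P \<inter> X. W p ?P E)"
    by (simp add: pmf_gnp[OF p] Int_commute)
  also have "\<dots> = Pr p ?P X" unfolding Pr_def
    by (simp add: sum.inter_restrict[OF finite_Pow_iff[THEN iffD2, OF finite_vertex_pairs]])
  finally show ?thesis .
qed

lemma expectation_gnp:
  assumes p: "0 \<le> p" "p \<le> 1"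
  shows "measure_pmf.expectation (gnp n p) f = (\<Sum>E\<in>Pow (vertex_pairs n). f E * W p (vertex_pairs n) E)"
proof -
  have "measure_pmf.expectation (gnp n p) f = (\<Sum>E\<in>Pow (vertex_pairs n). f E * pmf (gnp n p) E)"
    by (rule integral_measure_pmf_real) (use finite_vertex_pairs set_pmf_gnp[OF p, of n] in auto)
  also have "\<dots> = (\<Sum>E\<in>Pow (vertex_pairs n). f E * W p (vertex_pairs n) E)"
    by (intro sum.cong) (auto simp: pmf_gnp[OF p])
  finally show ?thesis .
qed


lemma two_choose2: "2 * (n choose 2) = n * (n - 1)"
proof -
  have "even (n * (n - 1))" by (cases "even n") auto
  then show ?thesis by (simp add: choose_two)
qed

lemma exp_ineq:
  assumes "2 \<le> j" "j + 1 \<le> k"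
  shows "k * (2 * k - j) + j * (j - 1) \<le> 2 * (k * (k - 1)) + (2::nat)"
proof -
  define a where "a = j - 2"
  define b where "b = k - j - 1"
  have j: "j = a + 2" and k: "k = a + 3 + b" using assms unfolding a_def b_def by auto
  have s1: "2 * k - j = a + 4 + 2 * b" "k - 1 = a + 2 + b" "j - 1 = a + 1" unfolding j k by auto
  have "2 * (k * (k - 1)) + 2 = k * (2 * k - j) + j * (j - 1) + a * b"
    unfolding s1 unfolding j k by (simp add: algebra_simps)
  then show ?thesis by simp
qed


lemma k4_bound: "4 \<le> k \<Longrightarrow> 8 * k ^ 4 \<le> (20::nat) ^ (k - 1)"
proof (induction k rule: dec_induct)
  case base then show ?case by simp
next
  case (step k)
  have "8 * (Suc k) ^ 4 \<le> 20 * (8 * k ^ 4)"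
  proof -
    have "Suc k \<le> 2 * k" using step(1) by simp
    then have "(Suc k) ^ 4 \<le> (2 * k) ^ 4" by (rule power_mono) simp
    also have "\<dots> = 16 * k ^ 4" by (simp add: power_mult_distrib)
    finally show ?thesis by simp
  qed
  also have "\<dots> \<le> 20 * 20 ^ (k - 1)" using step by simp
  also have "\<dots> = 20 ^ (Suc k - 1)" using step(1) by (cases k) auto
  finally show ?case .
qed

lemma const2:
  assumes "3 \<le> k"
  shows "5 * (2 * k ^ 2) ^ k \<le> 4 * (20::nat) ^ (k choose 2)"
proof (cases "k = 3")
  case True
  have "3 choose 2 = (3::nat)" by (simp add: choose_two)
  then show ?thesis using True by simp
next
  case False
  then have k4: "4 \<le> k" using assms by simp
  have q1: "((2 * k ^ 2) ^ k) ^ 2 = ((2 * k ^ 2) ^ 2) ^ k" unfolding power_mult[symmetric] by (simp only: mult.commute)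
  have q2: "(2 * k ^ 2) ^ 2 = 4 * k ^ 4" by (simp add: power_mult_distrib power_mult[symmetric])
  have "(4 * (2 * k ^ 2) ^ k) ^ 2 = 4 ^ 2 * ((2 * k ^ 2) ^ k) ^ 2" by (rule power_mult_distrib)
  also have "\<dots> = 16 * (4 * k ^ 4) ^ k" unfolding q1 q2 by simp
  also have "\<dots> \<le> 2 ^ k * (4 * k ^ 4) ^ k"
  proof -
    have "(16::nat) = 2 ^ 4" by simp
    also have "\<dots> \<le> 2 ^ k" using k4 by (intro power_increasing) auto
    finally show ?thesis by simp
  qed
  also have "\<dots> = (2 * (4 * k ^ 4)) ^ k" by (rule power_mult_distrib[symmetric])
  also have "\<dots> = (8 * k ^ 4) ^ k" by simp
  also have "\<dots> \<le> (20 ^ (k - 1)) ^ k" by (rule power_mono[OF k4_bound[OF k4]]) simp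
  also have "\<dots> = 20 ^ ((k - 1) * k)" by (rule power_mult[symmetric])
  also have "(k - 1) * k = (k choose 2) * 2" using two_choose2[of k] by (simp only: mult.commute)
  also have "(20::nat) ^ ((k choose 2) * 2) = (20 ^ (k choose 2)) ^ 2" by (rule power_mult)
  finally have "4 * (2 * k ^ 2) ^ k \<le> 20 ^ (k choose 2)"
    by (rule power2_le_imp_le) simp
  then show ?thesis by simp
qed


lemma four_k: "3 \<le> k \<Longrightarrow> 4 * k \<le> (2::nat) ^ (k + 1)"
proof (induction k rule: dec_induct)
  case base then show ?case by simp
next
  case (step k) then show ?case by simp
qed

lemma const1:
  assumes "3 \<le> k"
  shows "4 * k * 2 ^ k * 20 ^ (k * (k - 1)) \<le> (2::nat) ^ (15 * k * (k - 2))"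
proof -
  have "(20::nat) ^ (k * (k - 1)) \<le> 32 ^ (k * (k - 1))" by (rule power_mono) auto
  also have "\<dots> = 2 ^ (5 * (k * (k - 1)))" by (simp add: power_mult)
  finally have a: "(20::nat) ^ (k * (k - 1)) \<le> 2 ^ (5 * (k * (k - 1)))" .
  have "4 * k * 2 ^ k * 20 ^ (k * (k - 1)) \<le> 2 ^ (k + 1) * 2 ^ k * 2 ^ (5 * (k * (k - 1)))"
    using four_k[OF assms] a by (intro mult_mono) auto
  also have "\<dots> = 2 ^ (k + 1 + k + 5 * (k * (k - 1)))" by (simp add: power_add)
    (simp add: power_add[symmetric] mult_2)
  also have "\<dots> \<le> 2 ^ (15 * k * (k - 2))"
  proof (rule power_increasing)
    define b where "b = k - 3"
    have k: "k = b + 3" using assms unfolding b_def by auto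
    have s1: "k - 1 = b + 2" "k - 2 = b + 1" unfolding k by auto
    have "15 * k * (k - 2) = k + 1 + k + 5 * (k * (k - 1)) + (10 * b * b + 33 * b + 8)"
      unfolding s1 unfolding k by (simp add: algebra_simps)
    then show "k + 1 + k + 5 * (k * (k - 1)) \<le> 15 * k * (k - 2)" by simp
  qed simp
  finally show ?thesis .
qed


lemma e_bound:
  assumes "10 \<le> n"
  shows "3 * 2 ^ n < exp (real n)"
proof -
  have e4: "(5/4::real) \<le> exp (1/4)" using exp_ge_add_one_self[of "1/4"] by simp
  have "exp (real n) = exp (real (4 * n) * (1/4))" by simp
  also have "\<dots> = exp (1/4) ^ (4 * n)" by (rule exp_of_nat_mult)
  finally have ex: "exp (real n) = (exp (1/4) ^ 4) ^ n" by (simp add: power_mult)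
  have "(625/256::real) ^ n \<le> (exp (1/4) ^ 4) ^ n"
  proof (rule power_mono)
    have "(625/256::real) = (5/4) ^ 4" by (simp add: power_divide)
    also have "\<dots> \<le> exp (1/4) ^ 4" by (rule power_mono[OF e4]) simp
    finally show "(625/256::real) \<le> exp (1/4) ^ 4" .
  qed simp
  moreover have "3 * 2 ^ n < (625/256::real) ^ n"
  proof -
    have "1 + real n * (113/512) \<le> (1 + 113/512::real) ^ n" by (rule Bernoulli_inequality) simp
    moreover have "3 < 1 + real n * (113/512)" using assms by simp
    ultimately have "3 < (625/512::real) ^ n" by simp
    then have "3 * 2 ^ n < (625/512::real) ^ n * 2 ^ n" by simp
    also have "\<dots> = (625/256) ^ n" by (simp add: power_mult_distrib[symmetric])
    finally show ?thesis .
  qed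
  ultimately show ?thesis using ex by simp
qed


definition pairs :: "nat set \<Rightarrow> nat set set" where "pairs S = {e. e \<subseteq> S \<and> card e = 2}"

lemma is_clique_pairs: "is_clique E S \<longleftrightarrow> pairs S \<subseteq> E"
  unfolding is_clique_def pairs_def by auto

lemma pairs_sub: "S \<subseteq> {..<n} \<Longrightarrow> pairs S \<subseteq> vertex_pairs n"
  unfolding pairs_def vertex_pairs_def by auto

lemma card_pairs: "finite S \<Longrightarrow> card (pairs S) = card S choose 2"
  unfolding pairs_def by (rule n_subsets)

lemma pairs_Int: "pairs S \<inter> pairs T = pairs (S \<inter> T)"
  unfolding pairs_def by auto

lemma finite_pairs: "finite S \<Longrightarrow> finite (pairs S)"
  unfolding pairs_def by (rule finite_subset[of _ "Pow S"]) auto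

lemma pairs_ne: "finite X \<Longrightarrow> pairs X \<noteq> {} \<Longrightarrow> 2 \<le> card X"
proof -
  assume X: "finite X" "pairs X \<noteq> {}"
  then obtain e where e: "e \<subseteq> X" "card e = 2" unfolding pairs_def by auto
  then show "2 \<le> card X" using card_mono[OF X(1) e(1)] by simp
qed

lemma card_pairs_Un:
  assumes "finite S" "finite T" "card S = k" "card T = k"
  shows "card (pairs S \<union> pairs T) + (card (S \<inter> T) choose 2) = 2 * (k choose 2)"
proof -
  have "card (pairs S) + card (pairs T) = card (pairs S \<union> pairs T) + card (pairs S \<inter> pairs T)"
    by (rule card_Un_Int) (use assms finite_pairs in auto)
  then show ?thesis using assms by (simp add: pairs_Int card_pairs finite_subset[of "S \<inter> T" S])
qed

lemma count_T:
  assumes U: "finite U" and S: "finite S"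
  shows "card {T. T \<subseteq> U \<and> card T = k \<and> card (S \<inter> T) = j} \<le> (card S choose j) * (card U choose (k - j))"
proof -
  let ?A = "{T. T \<subseteq> U \<and> card T = k \<and> card (S \<inter> T) = j}"
  let ?B = "{J. J \<subseteq> S \<and> card J = j} \<times> {R. R \<subseteq> U \<and> card R = k - j}"
  define f where "f = (\<lambda>T. (S \<inter> T, T - S))"
  have inj: "inj_on f ?A"
  proof (rule inj_onI)
    fix T T' assume "f T = f T'"
    then have "S \<inter> T = S \<inter> T'" "T - S = T' - S" unfolding f_def by auto
    then show "T = T'" by blast
  qed
  have img: "f ` ?A \<subseteq> ?B"
  proof
    fix x assume "x \<in> f ` ?A"
    then obtain T where T: "T \<subseteq> U" "card T = k" "card (S \<inter> T) = j" and x: "x = f T" by auto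
    have fT: "finite T" using T(1) U finite_subset by blast
    have "card (T - S) = card T - card (T \<inter> S)" by (rule card_Diff_subset_Int) (use fT in auto)
    then have "card (T - S) = k - j" using T by (simp add: Int_commute)
    then show "x \<in> ?B" using T x unfolding f_def by auto
  qed
  have finB: "finite ?B" using U S by auto
  have "card ?A \<le> card ?B" by (rule card_inj_on_le[OF inj img finB])
  also have "\<dots> = (card S choose j) * (card U choose (k - j))"
    by (simp add: card_cartesian_product n_subsets U S)
  finally show ?thesis .
qed

lemma delta_S:
  fixes p :: real
  assumes p: "0 \<le> p" and U: "finite U" and S: "S \<subseteq> U" "card S = k"
  shows "(\<Sum>T\<in>{T\<in>{T. T \<subseteq> U \<and> card T = k}. T \<noteq> S \<and> pairs S \<inter> pairs T \<noteq> {}}. p ^ card (pairs S \<union> pairs T))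
    \<le> (\<Sum>j\<in>{2..<k}. real ((k choose j) * (card U choose (k - j))) * p ^ (2 * (k choose 2) - (j choose 2)))"
proof -
  define G where "G = {T\<in>{T. T \<subseteq> U \<and> card T = k}. T \<noteq> S \<and> pairs S \<inter> pairs T \<noteq> {}}"
  define c where "c = (\<lambda>T. card (S \<inter> T))"
  define h where "h = (\<lambda>j. p ^ (2 * (k choose 2) - (j choose 2)))"
  have fS: "finite S" using S U finite_subset by blast
  have finG: "finite G" unfolding G_def by (rule finite_subset[of _ "Pow U"]) (use U in auto)
  have hT: "p ^ card (pairs S \<union> pairs T) = h (c T)" if "T \<in> G" for T
  proof -
    have T: "T \<subseteq> U" "card T = k" using that unfolding G_def by auto
    have fT: "finite T" using T U finite_subset by blast
    have "card (pairs S \<union> pairs T) + (c T choose 2) = 2 * (k choose 2)"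
      unfolding c_def by (rule card_pairs_Un[OF fS fT S(2) T(2)])
    then have "card (pairs S \<union> pairs T) = 2 * (k choose 2) - (c T choose 2)" by simp
    then show ?thesis unfolding h_def by simp
  qed
  have cG: "c ` G \<subseteq> {2..<k}"
  proof
    fix j assume "j \<in> c ` G"
    then obtain T where T: "T \<in> G" and j: "j = c T" by auto
    have T': "T \<subseteq> U" "card T = k" "T \<noteq> S" "pairs S \<inter> pairs T \<noteq> {}" using T unfolding G_def by auto
    have fT: "finite T" using T' U finite_subset by blast
    have "2 \<le> card (S \<inter> T)" by (rule pairs_ne) (use fS T'(4) in \<open>auto simp: pairs_Int\<close>)
    moreover have "card (S \<inter> T) < k"
    proof (rule ccontr)
      assume "\<not> card (S \<inter> T) < k"
      then have "card (S \<inter> T) \<ge> card S" using S(2) by simp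
      moreover have "S \<inter> T \<subseteq> S" by auto
      ultimately have "S \<inter> T = S" using card_subset_eq[OF fS] card_mono[OF fS] by (metis le_antisym)
      then have "S \<subseteq> T" by auto
      then have "S = T" using card_subset_eq[OF fT] S(2) T'(2) by metis
      then show False using T'(3) by simp
    qed
    ultimately show "j \<in> {2..<k}" unfolding j c_def by simp
  qed
  have "(\<Sum>T\<in>G. p ^ card (pairs S \<union> pairs T)) = (\<Sum>T\<in>G. h (c T))"
    by (rule sum.cong) (auto simp: hT)
  also have "\<dots> = (\<Sum>j\<in>c ` G. \<Sum>T\<in>{T\<in>G. c T = j}. h (c T))"
    by (rule sum.image_gen[OF finG])
  also have "\<dots> = (\<Sum>j\<in>c ` G. real (card {T\<in>G. c T = j}) * h j)"
    by (rule sum.cong) auto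
  also have "\<dots> \<le> (\<Sum>j\<in>{2..<k}. real (card {T\<in>G. c T = j}) * h j)"
    by (rule sum_mono2) (use cG p in \<open>auto simp: h_def\<close>)
  also have "\<dots> \<le> (\<Sum>j\<in>{2..<k}. real ((k choose j) * (card U choose (k - j))) * h j)"
  proof (rule sum_mono)
    fix j assume "j \<in> {2..<k}"
    have "{T\<in>G. c T = j} \<subseteq> {T. T \<subseteq> U \<and> card T = k \<and> card (S \<inter> T) = j}"
      unfolding G_def c_def by auto
    then have "card {T\<in>G. c T = j} \<le> card {T. T \<subseteq> U \<and> card T = k \<and> card (S \<inter> T) = j}"
      by (rule card_mono[rotated]) (rule finite_subset[of _ "Pow U"], use U in auto)
    also have "\<dots> \<le> (k choose j) * (card U choose (k - j))" using count_T[OF U fS] S(2) by simp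
    finally have "real (card {T\<in>G. c T = j}) \<le> real ((k choose j) * (card U choose (k - j)))" by linarith
    then show "real (card {T\<in>G. c T = j}) * h j \<le> real ((k choose j) * (card U choose (k - j))) * h j"
      by (rule mult_right_mono) (use p in \<open>simp add: h_def\<close>)
  qed
  finally show ?thesis unfolding G_def h_def .
qed


lemma term_bound:
  fixes t M :: real
  assumes t: "1 \<le> t" and M: "0 \<le> M" "M \<le> t ^ k" and j: "2 \<le> j" "j + 1 \<le> k"
  shows "M ^ k * (real (k choose j) * M ^ (k - j)) * (20 / t\<^sup>2) ^ (2 * (k choose 2) - (j choose 2))
         \<le> 2 ^ k * 20 ^ (k * (k - 1)) * t\<^sup>2"
proof -
  define c where "c = 2 * (k choose 2) - (j choose 2)"
  have kk: "2 * (k choose 2) = k * (k - 1)" by (rule two_choose2)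
  have jj: "2 * (j choose 2) = j * (j - 1)" by (rule two_choose2)
  have cle: "c \<le> k * (k - 1)" unfolding c_def kk by simp
  have jle: "j choose 2 \<le> k * (k - 1)"
  proof -
    have "j choose 2 \<le> k choose 2" using j by (intro binomial_right_mono) simp
    then show ?thesis using kk by simp
  qed
  have c2: "2 * c = 2 * (k * (k - 1)) - j * (j - 1)" unfolding c_def kk[symmetric] jj[symmetric] by simp
  have jj2: "j * (j - 1) \<le> 2 * (k * (k - 1))" using jle jj by linarith
  have ex: "k * (2 * k - j) \<le> 2 * c + 2"
    using exp_ineq[OF j] c2 jj2 by linarith
  have tpos: "0 < t" using t by simp
  have "(20 / t\<^sup>2) ^ c = 20 ^ c / t ^ (2 * c)" by (simp add: power_divide power_mult)
  have A: "M ^ k * M ^ (k - j) \<le> t ^ (2 * c + 2)"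
  proof -
    have e: "k + (k - j) = 2 * k - j" using j by simp
    have "M ^ k * M ^ (k - j) = M ^ (k + (k - j))" by (simp add: power_add)
    also have "\<dots> = M ^ (2 * k - j)" unfolding e ..
    finally have "M ^ k * M ^ (k - j) = M ^ (2 * k - j)" .
    also have "\<dots> \<le> (t ^ k) ^ (2 * k - j)" by (rule power_mono[OF M(2) M(1)])
    also have "\<dots> = t ^ (k * (2 * k - j))" by (simp add: power_mult)
    also have "\<dots> \<le> t ^ (2 * c + 2)" by (rule power_increasing[OF ex t])
    finally show ?thesis .
  qed
  have B: "real (k choose j) \<le> 2 ^ k"
  proof -
    have "k choose j \<le> 2 ^ k" by (rule binomial_le_pow2)
    then show ?thesis by (metis of_nat_le_iff of_nat_numeral of_nat_power)
  qed
  have C: "(20::real) ^ c \<le> 20 ^ (k * (k - 1))" by (rule power_increasing[OF cle]) simp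
  have "M ^ k * (real (k choose j) * M ^ (k - j)) * (20 / t\<^sup>2) ^ c
      = real (k choose j) * (M ^ k * M ^ (k - j)) * 20 ^ c / t ^ (2 * c)"
    by (simp add: power_divide power_mult)
  also have "\<dots> \<le> 2 ^ k * t ^ (2 * c + 2) * 20 ^ (k * (k - 1)) / t ^ (2 * c)"
    by (intro divide_right_mono mult_mono A B C) (use M tpos in auto)
  also have "\<dots> = 2 ^ k * 20 ^ (k * (k - 1)) * t\<^sup>2"
    using tpos by (simp add: power_add power2_eq_square)
  finally show ?thesis unfolding c_def .
qed


lemma t_facts:
  assumes k: "3 \<le> k" and n: "2 ^ (15 * k\<^sup>2) \<le> n"
  defines "t \<equiv> real n powr (1 / real k)"
  shows "0 < t" "t ^ k = real n" "real n powr (- 2 / real k) = 1 / t\<^sup>2" "2 ^ (15 * k) \<le> t"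
proof -
  have n1: "(1::nat) \<le> 2 ^ (15 * k\<^sup>2)" by simp
  have npos: "0 < real n" using n n1 by linarith
  show tpos: "0 < t" unfolding t_def using npos by simp
  have "t ^ k = real n powr (real k * (1 / real k))" unfolding t_def
    by (rule powr_power) (use npos in simp)
  also have "\<dots> = real n" using k npos by simp
  finally show "t ^ k = real n" .
  have "real n powr (- 2 / real k) = t powr (- 2)" unfolding t_def powr_powr by simp
  also have "\<dots> = inverse (t powr 2)" by (rule powr_minus)
  also have "t powr 2 = t\<^sup>2" using powr_realpow[OF tpos, of 2] by simp
  finally show "real n powr (- 2 / real k) = 1 / t\<^sup>2" by (simp add: divide_inverse)
  have "(2::real) ^ (15 * k) = 2 powr (real (15 * k\<^sup>2) * (1 / real k))"
  proof -
    have "real (15 * k\<^sup>2) * (1 / real k) = real (15 * k)" using k by (simp add: power2_eq_square)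
    then show ?thesis using powr_realpow[of 2 "15 * k"] by simp
  qed
  also have "\<dots> = (2 powr real (15 * k\<^sup>2)) powr (1 / real k)" by (simp add: powr_powr)
  also have "\<dots> = (2 ^ (15 * k\<^sup>2)) powr (1 / real k)" using powr_realpow[of 2 "15 * k\<^sup>2"] by simp
  also have "\<dots> \<le> t" unfolding t_def
    by (rule powr_mono2) (use n in \<open>auto simp del: of_nat_power simp: of_nat_power[symmetric]\<close>)
  finally show "2 ^ (15 * k) \<le> t" .
qed

lemma mu_bound:
  fixes t p :: real
  assumes k: "3 \<le> k" and t: "0 < t" and tk: "t ^ k = real n" and nm: "real n = 2 * real k * real m"
    and km: "k \<le> m" and p: "p = 20 / t\<^sup>2"
  shows "5 / 4 * real n \<le> real (m choose k) * p ^ (k choose 2)"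
proof -
  have kk: "2 * (k choose 2) = k * (k - 1)" by (rule two_choose2)
  have c2: "(5::real) * (2 * real k ^ 2) ^ k \<le> 4 * 20 ^ (k choose 2)"
    using const2[OF k] by (metis (mono_tags) of_nat_le_iff of_nat_mult of_nat_numeral of_nat_power)
  have kpos: "0 < real k" using k by simp
  have mk: "real m / real k = t ^ k / (2 * real k ^ 2)"
    using tk nm kpos by (simp add: power2_eq_square field_simps)
  have "p ^ (k choose 2) = 20 ^ (k choose 2) / t ^ (k * (k - 1))"
    unfolding p kk[symmetric] by (simp add: power_divide power_mult)
  moreover have "(real m / real k) ^ k = t ^ (k * k) / (2 * real k ^ 2) ^ k"
    unfolding mk by (simp add: power_divide power_mult)
  moreover have "t ^ (k * k) = t ^ k * t ^ (k * (k - 1))"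
  proof -
    have "k * k = k + k * (k - 1)" using k by (cases k) auto
    then show ?thesis by (simp add: power_add)
  qed
  ultimately have XY: "(real m / real k) ^ k * p ^ (k choose 2) = t ^ k * (20 ^ (k choose 2) / (2 * real k ^ 2) ^ k)"
    using t by (simp add: field_simps)
  have XB: "(real m / real k) ^ k \<le> real (m choose k)" by (rule binomial_ge_n_over_k_pow_k[OF km])
  have R: "5 / 4 \<le> 20 ^ (k choose 2) / (2 * real k ^ 2) ^ k"
    using c2 kpos by (simp add: field_simps)
  have Y0: "0 \<le> p ^ (k choose 2)" unfolding p by simp
  have "5 / 4 * real n = t ^ k * (5 / 4)" using tk by simp
  also have "\<dots> \<le> t ^ k * (20 ^ (k choose 2) / (2 * real k ^ 2) ^ k)"
    by (rule mult_left_mono[OF R]) (use t in simp)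
  also have "\<dots> = (real m / real k) ^ k * p ^ (k choose 2)" using XY by simp
  also have "\<dots> \<le> real (m choose k) * p ^ (k choose 2)" by (rule mult_right_mono[OF XB Y0])
  finally show ?thesis .
qed

lemma delta_bound:
  fixes t p :: real
  assumes k: "3 \<le> k" and t: "2 ^ (15 * k) \<le> t" and tk: "t ^ k = real n" and mn: "m \<le> n"
    and km: "k \<le> m" and p: "p = 20 / t\<^sup>2"
  shows "real (m choose k) * (\<Sum>j\<in>{2..<k}. real ((k choose j) * (m choose (k - j))) *
           p ^ (2 * (k choose 2) - (j choose 2))) \<le> real n / 4"
proof -
  define Z where "Z = (2::real) ^ k * 20 ^ (k * (k - 1)) * t\<^sup>2"
  have t1: "1 \<le> t" using t by (smt (verit) one_le_power)
  have p0: "0 \<le> p" unfolding p by simp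
  have Mt: "real m \<le> t ^ k" using mn tk by simp
  have "real (m choose k) * (\<Sum>j\<in>{2..<k}. real ((k choose j) * (m choose (k - j))) *
           p ^ (2 * (k choose 2) - (j choose 2)))
      = (\<Sum>j\<in>{2..<k}. real (m choose k) * (real (k choose j) * real (m choose (k - j))) *
           p ^ (2 * (k choose 2) - (j choose 2)))"
    by (simp add: sum_distrib_left mult.assoc)
  also have "\<dots> \<le> (\<Sum>j\<in>{2..<k}. Z)"
  proof (rule sum_mono)
    fix j assume j: "j \<in> {2..<k}"
    then have j2: "2 \<le> j" "j + 1 \<le> k" by auto
    have b1: "real (m choose k) \<le> real m ^ k"
      using binomial_le_pow[OF km] by (metis of_nat_le_iff of_nat_power)
    have b2: "real (m choose (k - j)) \<le> real m ^ (k - j)"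
      using binomial_le_pow[of "k - j" m] km by (metis diff_le_self le_trans of_nat_le_iff of_nat_power)
    have "real (m choose k) * (real (k choose j) * real (m choose (k - j))) * p ^ (2 * (k choose 2) - (j choose 2))
        \<le> real m ^ k * (real (k choose j) * real m ^ (k - j)) * p ^ (2 * (k choose 2) - (j choose 2))"
      by (intro mult_right_mono mult_mono mult_left_mono b1 b2) (use p0 in auto)
    also have "\<dots> \<le> Z" unfolding Z_def p by (rule term_bound[OF t1 _ Mt j2]) simp
    finally show "real (m choose k) * (real (k choose j) * real (m choose (k - j))) *
           p ^ (2 * (k choose 2) - (j choose 2)) \<le> Z" .
  qed
  also have "\<dots> = real (k - 2) * Z" by simp
  also have "\<dots> \<le> real k * Z" by (rule mult_right_mono) (auto simp: Z_def)
  also have "\<dots> \<le> real n / 4"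
  proof -
    have c1: "4 * real k * 2 ^ k * 20 ^ (k * (k - 1)) \<le> (2::real) ^ (15 * k * (k - 2))"
      using const1[OF k] by (metis (mono_tags) of_nat_le_iff of_nat_mult of_nat_numeral of_nat_power)
    have "(2::real) ^ (15 * k * (k - 2)) = (2 ^ (15 * k)) ^ (k - 2)" by (simp add: power_mult)
    also have "\<dots> \<le> t ^ (k - 2)" by (rule power_mono[OF t]) simp
    finally have "4 * real k * 2 ^ k * 20 ^ (k * (k - 1)) * t\<^sup>2 \<le> t ^ (k - 2) * t\<^sup>2"
      using c1 by (intro mult_right_mono) auto
    also have "\<dots> = t ^ (k - 2 + 2)" by (rule power_add[symmetric])
    also have "k - 2 + 2 = k" using k by simp
    finally show ?thesis unfolding Z_def using tk by simp
  qed
  finally show ?thesis .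
qed


theorem lemma2:
  fixes k n :: nat and p :: real
  assumes "k \<ge> 3"
    and "n \<ge> 2 ^ (15 * k\<^sup>2)"
    and "(2 * k) dvd n"
    and "p = 20 * real n powr (- 2 / real k)"
  shows "(measure_pmf.expectation (gnp n p) (\<lambda>E. real (num_cliques n E (k + 1)))
           \<le> 20 ^ ((k + 1) choose 2)) \<and>
         (measure_pmf.prob (gnp n p)
           {E. \<forall>U. U \<subseteq> {..<n} \<and> card U = n div (2 * k) \<longrightarrow>
                  (\<exists>S. S \<subseteq> U \<and> card S = k \<and> is_clique E S)} > 2 / 3)"
proof -
  note k = assms(1) and nbig = assms(2)
  define t where "t = real n powr (1 / real k)"
  have tpos: "0 < t" and tk: "t ^ k = real n" and tp: "real n powr (- 2 / real k) = 1 / t\<^sup>2"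
    and tbig: "2 ^ (15 * k) \<le> t"
    using t_facts[OF k nbig] unfolding t_def by auto
  have p: "p = 20 / t\<^sup>2" using assms(4) tp by simp
  have t45: "(2::real) ^ 45 \<le> t"
  proof -
    have "(2::real) ^ 45 \<le> 2 ^ (15 * k)" by (rule power_increasing) (use k in auto)
    then show ?thesis using tbig by simp
  qed
  have t1: "1 \<le> t" using t45 by simp
  have p0: "0 \<le> p" unfolding p by simp
  have p1: "p \<le> 1"
  proof -
    have "(20::real) \<le> 2 ^ 45" by simp
    also have "\<dots> \<le> t" by (rule t45)
    also have "t \<le> t\<^sup>2" using t1 by (simp add: power2_eq_square)
    finally show ?thesis unfolding p using tpos by simp
  qed
  define P where "P = vertex_pairs n"
  have fP: "finite P" unfolding P_def by (rule finite_vertex_pairs)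
  have n10: "10 \<le> n"
  proof -
    have "(10::nat) \<le> 2 ^ 4" by simp
    also have "\<dots> \<le> 2 ^ (15 * k\<^sup>2)"
    proof (rule power_increasing)
      have "3 * 3 \<le> k * k" using mult_le_mono[OF k k] .
      then show "4 \<le> 15 * k\<^sup>2" by (simp add: power2_eq_square)
    qed simp
    finally show ?thesis using nbig by simp
  qed
  have partA: "measure_pmf.expectation (gnp n p) (\<lambda>E. real (num_cliques n E (k + 1)))
           \<le> 20 ^ ((k + 1) choose 2)"
  proof -
    define K where "K = {S. S \<subseteq> {..<n} \<and> card S = k + 1}"
    have finK: "finite K" unfolding K_def by (rule finite_subset[of _ "Pow {..<n}"]) auto
    have nc: "real (num_cliques n E (k + 1)) = (\<Sum>S\<in>K. if pairs S \<subseteq> E then 1 else 0)" for E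
    proof -
      have "{S. S \<subseteq> {..<n} \<and> card S = k + 1 \<and> is_clique E S} = {S \<in> K. pairs S \<subseteq> E}"
        by (auto simp: K_def is_clique_pairs)
      then have "real (num_cliques n E (k + 1)) = (\<Sum>S\<in>{S \<in> K. pairs S \<subseteq> E}. 1)"
        unfolding num_cliques_def by simp
      also have "\<dots> = (\<Sum>S\<in>K. if pairs S \<subseteq> E then 1 else 0)" by (rule sum.inter_filter[OF finK])
      finally show ?thesis .
    qed
    have "measure_pmf.expectation (gnp n p) (\<lambda>E. real (num_cliques n E (k + 1)))
        = (\<Sum>E\<in>Pow P. (\<Sum>S\<in>K. if pairs S \<subseteq> E then 1 else 0) * W p P E)"
      unfolding expectation_gnp[OF p0 p1] P_def nc ..
    also have "\<dots> = (\<Sum>E\<in>Pow P. \<Sum>S\<in>K. if pairs S \<subseteq> E then W p P E else 0)"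
      by (auto simp: sum_distrib_right intro!: sum.cong)
    also have "\<dots> = (\<Sum>S\<in>K. \<Sum>E\<in>Pow P. if pairs S \<subseteq> E then W p P E else 0)"
      by (rule sum.swap)
    also have "\<dots> = (\<Sum>S\<in>K. Pr p P (evt (pairs S)))"
      unfolding Pr_def evt_def by simp
    also have "\<dots> = (\<Sum>S\<in>K. p ^ ((k + 1) choose 2))"
    proof (rule sum.cong)
      fix S assume S: "S \<in> K"
      then have fS: "finite S" unfolding K_def using finite_subset by blast
      have "Pr p P (evt (pairs S)) = p ^ card (pairs S)"
        by (rule Pr_principal[OF fP]) (use S pairs_sub[of S n] in \<open>auto simp: K_def P_def\<close>)
      then show "Pr p P (evt (pairs S)) = p ^ ((k + 1) choose 2)" using S fS by (simp add: card_pairs K_def)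
    qed simp
    also have "\<dots> = real (n choose (k + 1)) * p ^ ((k + 1) choose 2)"
      unfolding K_def by (simp add: n_subsets)
    also have "\<dots> \<le> 20 ^ ((k + 1) choose 2)"
    proof -
      have kk: "2 * ((k + 1) choose 2) = (k + 1) * k" using two_choose2[of "k + 1"] by simp
      have le: "k + 1 \<le> n"
      proof -
        have "1 * k \<le> k * k" by (rule mult_le_mono1) (use k in simp)
        then have "k + 1 \<le> 15 * k\<^sup>2" unfolding power2_eq_square using k by linarith
        also have "\<dots> < 2 ^ (15 * k\<^sup>2)" by (rule less_exp)
        also have "\<dots> \<le> n" by (rule nbig)
        finally show ?thesis by simp
      qed
      have b: "real (n choose (k + 1)) \<le> real n ^ (k + 1)"
        using binomial_le_pow[OF le] by (metis of_nat_le_iff of_nat_power)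
      have "real n ^ (k + 1) = t ^ (2 * ((k + 1) choose 2))"
      proof -
        have "real n ^ (k + 1) = (t ^ k) ^ (k + 1)" unfolding tk ..
        also have "\<dots> = t ^ (k * (k + 1))" by (rule power_mult[symmetric])
        also have "k * (k + 1) = 2 * ((k + 1) choose 2)" unfolding kk by simp
        finally show ?thesis .
      qed
      moreover have "p ^ ((k + 1) choose 2) = 20 ^ ((k + 1) choose 2) / t ^ (2 * ((k + 1) choose 2))"
        unfolding p by (simp add: power_divide power_mult)
      ultimately have "real n ^ (k + 1) * p ^ ((k + 1) choose 2) = 20 ^ ((k + 1) choose 2)"
        using tpos by simp
      moreover have "real (n choose (k + 1)) * p ^ ((k + 1) choose 2) \<le> real n ^ (k + 1) * p ^ ((k + 1) choose 2)"
        by (rule mult_right_mono[OF b]) (use p0 in simp)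
      ultimately show ?thesis by simp
    qed
    finally show ?thesis .
  qed
  define m where "m = n div (2 * k)"
  have nm: "n = 2 * k * m" unfolding m_def using assms(3) by simp
  have km: "k \<le> m"
  proof -
    have "2 * k * k \<le> 15 * k\<^sup>2" by (simp add: power2_eq_square)
    also have "\<dots> < 2 ^ (15 * k\<^sup>2)" by (rule less_exp)
    also have "\<dots> \<le> n" by (rule nbig)
    finally have "2 * k * k < 2 * k * m" using nm by simp
    then show ?thesis by simp
  qed
  have mn: "m \<le> n" using nm k by simp
  have nmr: "real n = 2 * real k * real m" using nm by simp
  define G where "G = {E. \<forall>U. U \<subseteq> {..<n} \<and> card U = n div (2 * k) \<longrightarrow>
                  (\<exists>S. S \<subseteq> U \<and> card S = k \<and> is_clique E S)}"
  define Us where "Us = {U. U \<subseteq> {..<n} \<and> card U = m}"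
  define NoK where "NoK = (\<lambda>U. {E. \<forall>S\<in>{S. S \<subseteq> U \<and> card S = k}. \<not> pairs S \<subseteq> E})"
  have finUs: "finite Us" unfolding Us_def by (rule finite_subset[of _ "Pow {..<n}"]) auto
  have cover: "UNIV - G \<subseteq> (\<Union>U\<in>Us. NoK U)"
    unfolding G_def Us_def NoK_def m_def by (auto simp: is_clique_pairs)
  have perU: "Pr p P (NoK U) \<le> exp (- real n)" if U: "U \<in> Us" for U
  proof -
    define F where "F = {S. S \<subseteq> U \<and> card S = k}"
    have Un: "U \<subseteq> {..<n}" "card U = m" using U unfolding Us_def by auto
    have fU: "finite U" using Un finite_subset by blast
    have finF: "finite F" unfolding F_def by (rule finite_subset[of _ "Pow U"]) (use fU in auto)
    have FP: "\<forall>S\<in>F. pairs S \<subseteq> P" unfolding F_def P_def using Un(1) pairs_sub[of _ n] by blast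
    define \<mu> where "\<mu> = (\<Sum>S\<in>F. p ^ card (pairs S))"
    define \<delta> where "\<delta> = (\<Sum>S\<in>F. \<Sum>T\<in>{T\<in>F. T \<noteq> S \<and> pairs S \<inter> pairs T \<noteq> {}}. p ^ card (pairs S \<union> pairs T))"
    have J: "Pr p P (NoK U) \<le> exp (- \<mu> + \<delta>)"
      unfolding NoK_def \<mu>_def \<delta>_def F_def[symmetric] by (rule janson[OF fP p0 p1 finF FP])
    have mu: "\<mu> = real (m choose k) * p ^ (k choose 2)"
    proof -
      have "\<mu> = (\<Sum>S\<in>F. p ^ (k choose 2))"
        unfolding \<mu>_def
      proof (rule sum.cong)
        fix S assume "S \<in> F"
        then have "finite S" "card S = k" unfolding F_def using fU finite_subset by auto
        then show "p ^ card (pairs S) = p ^ (k choose 2)" by (simp add: card_pairs)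
      qed simp
      also have "\<dots> = real (m choose k) * p ^ (k choose 2)"
        unfolding F_def using fU Un(2) by (simp add: n_subsets)
      finally show ?thesis .
    qed
    define D where "D = (\<Sum>j\<in>{2..<k}. real ((k choose j) * (m choose (k - j))) *
           p ^ (2 * (k choose 2) - (j choose 2)))"
    have dl: "\<delta> \<le> real (m choose k) * D"
    proof -
      have "\<delta> \<le> (\<Sum>S\<in>F. D)"
        unfolding \<delta>_def
      proof (rule sum_mono)
        fix S assume "S \<in> F"
        then have S: "S \<subseteq> U" "card S = k" unfolding F_def by auto
        show "(\<Sum>T\<in>{T\<in>F. T \<noteq> S \<and> pairs S \<inter> pairs T \<noteq> {}}. p ^ card (pairs S \<union> pairs T)) \<le> D"
          using delta_S[OF p0 fU S] unfolding D_def F_def Un(2) .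
      qed
      also have "\<dots> = real (m choose k) * D"
        unfolding F_def using fU Un(2) by (simp add: n_subsets)
      finally show ?thesis .
    qed
    have "5 / 4 * real n \<le> \<mu>" unfolding mu by (rule mu_bound[OF k tpos tk nmr km p])
    moreover have "real (m choose k) * D \<le> real n / 4" unfolding D_def by (rule delta_bound[OF k tbig tk mn km p])
    ultimately have "- \<mu> + \<delta> \<le> - real n" using dl by simp
    then show ?thesis using J by (meson exp_le_cancel_iff order_trans)
  qed
  have "Pr p P (UNIV - G) \<le> Pr p P (\<Union>U\<in>Us. NoK U)"
    by (rule Pr_mono[OF p0 p1]) (use cover in auto)
  also have "\<dots> \<le> (\<Sum>U\<in>Us. Pr p P (NoK U))" by (rule Pr_Union_le[OF p0 p1 finUs])
  also have "\<dots> \<le> (\<Sum>U\<in>Us. exp (- real n))" by (rule sum_mono) (rule perU)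
  also have "\<dots> = real (n choose m) * exp (- real n)" unfolding Us_def by (simp add: n_subsets)
  also have "\<dots> \<le> 2 ^ n * exp (- real n)"
  proof (rule mult_right_mono)
    show "real (n choose m) \<le> 2 ^ n" using binomial_le_pow2[of n m] by (metis of_nat_le_iff of_nat_numeral of_nat_power)
  qed simp
  also have "\<dots> < 1 / 3"
  proof -
    have "3 * 2 ^ n < exp (real n)" by (rule e_bound[OF n10])
    then show ?thesis by (simp add: exp_minus field_simps)
  qed
  finally have bad: "Pr p P (UNIV - G) < 1 / 3" .
  have "Pr p P UNIV = Pr p P (UNIV \<inter> G) + Pr p P (UNIV - G)" by (rule Pr_split)
  then have "Pr p P G = 1 - Pr p P (UNIV - G)" using Pr_UNIV[OF fP] by simp
  then have "Pr p P G > 2 / 3" using bad by simp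
  then have partB: "measure_pmf.prob (gnp n p) G > 2 / 3"
    unfolding prob_gnp[OF p0 p1] P_def .
  show ?thesis using partA partB unfolding G_def by simp
qed

end
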